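(* Let $p$ be a prime, $n\ge1$, and $a_1,\dots,a_n\in\mathbb{Z}$. Define $\mathfrak{b}':\{0,\dots,p-1\}^n\to\mathbb{Z}$ by $\mathfrak{b}'(x_1,\dots,x_n)=\sum_{i=1}^na_ix_i$, and let $r:\mathbb{Z}\to\{0,\dots,p^n-1\}$ be reduction modulo $p^n$. Then $r\circ\mathfrak{b}':\{0,\dots,p-1\}^n\to\{0,\dots,p^n-1\}$ is bijective if and only if, after relabelling the indices $1,\dots,n$ if necessary, $v(a_i)=n-i$ for $1\le i\le n$, where $v$ denotes the $p$-adic valuation. *)

theory Defs
  imports Main "HOL-Library.FuncSet" "HOL-Computational_Algebra.Primes"
begin

end

theory Submission imports Defs "HOL-Analysis.Analysis" begin

definition ee :: "nat \<Rightarrow> int \<Rightarrow> complex" where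
  "ee N m = exp (2 * of_real pi * \<i> * of_int m / of_nat N)"

lemma ee_add: "ee N (m + k) = ee N m * ee N k"
  unfolding ee_def by (simp add: exp_add[symmetric] algebra_simps add_divide_distrib)

lemma ee_sum: "finite A \<Longrightarrow> ee N (\<Sum>i\<in>A. f i) = (\<Prod>i\<in>A. ee N (f i))"
  by (induction A rule: finite_induct) (auto simp: ee_add, simp add: ee_def)

lemma ee_mult_nat: "ee N (m * int k) = ee N m ^ k"
proof -
  have "ee N (m * int k) = exp (of_nat k * (2 * of_real pi * \<i> * of_int m / of_nat N))"
    unfolding ee_def by (simp add: algebra_simps)
  also have "\<dots> = ee N m ^ k" unfolding ee_def by (rule exp_of_nat_mult)
  finally show ?thesis .
qed

lemma ee_one_iff:
  assumes "N > 0"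
  shows "ee N m = 1 \<longleftrightarrow> int N dvd m"
proof -
  have "ee N m = 1 \<longleftrightarrow> (\<exists>n::int. 2 * pi * of_int m / of_nat N = of_int (2 * n) * pi)"
    unfolding ee_def exp_eq_1 by (simp add: Im_divide_of_nat Re_divide_of_nat)
  also have "\<dots> \<longleftrightarrow> (\<exists>n::int. of_int m = of_int n * (of_nat N::real))"
    using assms by (auto simp: field_simps)
  also have "\<dots> \<longleftrightarrow> (\<exists>n::int. m = n * int N)"
    by (metis of_int_eq_iff of_int_mult of_int_of_nat_eq)
  also have "\<dots> \<longleftrightarrow> int N dvd m" by (auto simp: dvd_def mult.commute)
  finally show ?thesis .
qed

lemma ee_mod:
  assumes "int N dvd M" "N > 0"
  shows "ee N (m mod M) = ee N m"
proof -
  have "m = m mod M + M * (m div M)" by simp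
  hence "ee N m = ee N (m mod M) * ee N (M * (m div M))" by (metis ee_add)
  moreover have "ee N (M * (m div M)) = 1" using assms by (simp add: ee_one_iff)
  ultimately show ?thesis by simp
qed

lemma sum_int_range: "(\<Sum>y\<in>{0..<int p}. g y) = (\<Sum>k<p. g (int k))"
proof -
  have "{0..<int p} = int ` {..<p}"
    by (auto simp: image_iff) (metis lessThan_iff nat_0_le nat_less_iff)
  thus ?thesis by (simp add: sum.reindex)
qed

lemma factor_zero:
  fixes p s :: nat and c :: int
  assumes "prime p" "s \<ge> 1"
  shows "(\<Sum>y\<in>{0..<int p}. ee (p^s) (c * y)) = 0 \<longleftrightarrow> c \<noteq> 0 \<and> multiplicity (int p) c = s - 1"
proof -
  have p0: "p > 0" using assms prime_gt_0_nat by blast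
  have pp: "prime (int p)" using assms by simp
  have N0: "p ^ s > 0" using p0 by simp
  let ?z = "ee (p^s) c"
  have "(\<Sum>y\<in>{0..<int p}. ee (p^s) (c * y)) = (\<Sum>k<p. ?z ^ k)"
    by (simp add: sum_int_range ee_mult_nat)
  also have "\<dots> = (if ?z = 1 then of_nat p else (1 - ?z^p) / (1 - ?z))" by (rule sum_gp_strict)
  finally have "(\<Sum>y\<in>{0..<int p}. ee (p^s) (c * y)) = 0 \<longleftrightarrow> ?z \<noteq> 1 \<and> ?z ^ p = 1"
    using p0 by auto
  also have "\<dots> \<longleftrightarrow> \<not> int p ^ s dvd c \<and> int p ^ s dvd c * int p"
    using N0 by (simp add: ee_one_iff ee_mult_nat[symmetric])
  also have "int p ^ s dvd c * int p \<longleftrightarrow> int p ^ (s - 1) dvd c"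
  proof -
    have "int p ^ s = int p ^ (s-1) * int p" using assms(2)
      by (metis Suc_diff_le diff_Suc_1 power_Suc2)
    thus ?thesis using p0 by simp
  qed
  also have "(\<not> int p ^ s dvd c \<and> int p ^ (s - 1) dvd c) \<longleftrightarrow> c \<noteq> 0 \<and> multiplicity (int p) c = s - 1"
  proof (cases "c = 0")
    case True thus ?thesis by simp
  next
    case False
    have nu: "\<not> is_unit (int p)" using pp not_prime_unit by blast
    show ?thesis using False assms(2)
      by (simp add: power_dvd_iff_le_multiplicity[OF False nu]) linarith
  qed
  finally show ?thesis .
qed

lemma forward:
  fixes p n :: nat and a :: "nat \<Rightarrow> int"
  assumes p: "prime p" and s: "1 \<le> s" "s \<le> n"
    and bij: "bij_betw (\<lambda>x. (\<Sum>i<n. a i * x i) mod (int p ^ n))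
            ({..<n} \<rightarrow>\<^sub>E {0..<int p}) {0..<int p ^ n}"
  shows "\<exists>i<n. a i \<noteq> 0 \<and> multiplicity (int p) (a i) = s - 1"
proof -
  have p0: "p > 1" using p prime_gt_1_nat by blast
  define N where "N = p ^ s"
  have N0: "N > 0" using p0 by (simp add: N_def)
  have N1: "N > 1" unfolding N_def by (rule one_less_power) (use p0 s in auto)
  have Ndvd: "int N dvd int p ^ n" using s by (simp add: N_def le_imp_power_dvd)
  let ?A = "{..<n} \<rightarrow>\<^sub>E {0..<int p}"
  let ?f = "\<lambda>x. (\<Sum>i<n. a i * x i)"
  have "(\<Sum>x\<in>?A. ee N (?f x mod (int p ^ n))) = (\<Sum>r\<in>{0..<int p ^ n}. ee N r)"
    by (rule sum.reindex_bij_betw[OF bij])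
  also have "\<dots> = (\<Sum>k<p^n. ee N (int k))"
    using sum_int_range[of "ee N" "p^n"] by simp
  also have "\<dots> = (\<Sum>k<p^n. ee N 1 ^ k)"
    by (simp add: ee_mult_nat[symmetric])
  also have "\<dots> = 0"
  proof -
    have "ee N 1 \<noteq> 1" using N1 N0 by (simp add: ee_one_iff)
    moreover have "ee N 1 ^ (p ^ n) = 1"
      using Ndvd N0 by (simp add: ee_mult_nat[symmetric] ee_one_iff)
    ultimately show ?thesis by (simp add: sum_gp_strict)
  qed
  finally have "(\<Sum>x\<in>?A. ee N (?f x)) = 0"
    using Ndvd N0 by (simp add: ee_mod)
  moreover have "(\<Sum>x\<in>?A. ee N (?f x)) = (\<Prod>i<n. \<Sum>y\<in>{0..<int p}. ee N (a i * y))"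
  proof -
    have "(\<Sum>x\<in>?A. ee N (?f x)) = (\<Sum>x\<in>?A. \<Prod>i<n. ee N (a i * x i))"
      by (rule sum.cong) (simp_all add: ee_sum)
    also have "\<dots> = (\<Prod>i<n. \<Sum>y\<in>{0..<int p}. ee N (a i * y))"
      by (rule prod_sum_PiE[symmetric]) auto
    finally show ?thesis .
  qed
  ultimately have "(\<Prod>i<n. \<Sum>y\<in>{0..<int p}. ee N (a i * y)) = 0" by simp
  then obtain i where "i < n" "(\<Sum>y\<in>{0..<int p}. ee N (a i * y)) = 0"
    by (metis (no_types, lifting) finite_lessThan lessThan_iff prod_zero_iff)
  thus ?thesis using factor_zero[OF p s(1)] unfolding N_def by blast
qed

theorem propositionA2:
  fixes p n :: nat and a :: "nat \<Rightarrow> int"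
  assumes "prime p" and "n \<ge> 1"
  shows "bij_betw (\<lambda>x. (\<Sum>i<n. a i * x i) mod (int p ^ n))
            ({..<n} \<rightarrow>\<^sub>E {0..<int p}) {0..<int p ^ n}
         \<longleftrightarrow> (\<exists>\<sigma>. bij_betw \<sigma> {..<n} {..<n} \<and>
               (\<forall>i<n. a (\<sigma> i) \<noteq> 0 \<and> multiplicity (int p) (a (\<sigma> i)) = n - 1 - i))"
proof
  assume bij: "bij_betw (\<lambda>x. (\<Sum>i<n. a i * x i) mod (int p ^ n))
            ({..<n} \<rightarrow>\<^sub>E {0..<int p}) {0..<int p ^ n}"
  define \<sigma> where "\<sigma> k = (SOME i. i < n \<and> a i \<noteq> 0 \<and> multiplicity (int p) (a i) = n - 1 - k)" for k
  have \<sigma>: "\<sigma> k < n \<and> a (\<sigma> k) \<noteq> 0 \<and> multiplicity (int p) (a (\<sigma> k)) = n - 1 - k" if "k < n" for k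
  proof -
    have "\<exists>i<n. a i \<noteq> 0 \<and> multiplicity (int p) (a i) = (n - k) - 1"
      by (rule forward[OF assms(1) _ _ bij]) (use that in auto)
    hence "\<exists>i. i < n \<and> a i \<noteq> 0 \<and> multiplicity (int p) (a i) = n - 1 - k" by auto
    thus ?thesis unfolding \<sigma>_def by (rule someI_ex)
  qed
  have inj: "inj_on \<sigma> {..<n}"
  proof (rule inj_onI)
    fix x y assume "x \<in> {..<n}" "y \<in> {..<n}" "\<sigma> x = \<sigma> y"
    thus "x = y" using \<sigma>[of x] \<sigma>[of y] by auto
  qed
  have "\<sigma> ` {..<n} \<subseteq> {..<n}" using \<sigma> by auto
  hence "\<sigma> ` {..<n} = {..<n}" using inj by (simp add: endo_inj_surj)
  hence "bij_betw \<sigma> {..<n} {..<n}" using inj by (simp add: bij_betw_def)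
  thus "\<exists>\<sigma>. bij_betw \<sigma> {..<n} {..<n} \<and>
               (\<forall>i<n. a (\<sigma> i) \<noteq> 0 \<and> multiplicity (int p) (a (\<sigma> i)) = n - 1 - i)" using \<sigma> by blast
next
  assume "\<exists>\<sigma>. bij_betw \<sigma> {..<n} {..<n} \<and>
               (\<forall>i<n. a (\<sigma> i) \<noteq> 0 \<and> multiplicity (int p) (a (\<sigma> i)) = n - 1 - i)"
  then obtain \<sigma> where bs: "bij_betw \<sigma> {..<n} {..<n}"
    and v: "\<And>i. i < n \<Longrightarrow> a (\<sigma> i) \<noteq> 0 \<and> multiplicity (int p) (a (\<sigma> i)) = n - 1 - i" by blast
  have pp: "prime (int p)" using assms by simp
  have p1: "p > 1" using assms prime_gt_1_nat by blast
  have nu: "\<not> is_unit (int p)" using pp not_prime_unit by blast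
  have anz: "a i \<noteq> 0" and vlt: "multiplicity (int p) (a i) < n" if "i < n" for i
  proof -
    have "i \<in> \<sigma> ` {..<n}" using bs that by (simp add: bij_betw_def)
    then obtain k where k: "k < n" "i = \<sigma> k" by auto
    show "a i \<noteq> 0" "multiplicity (int p) (a i) < n" using v[OF k(1)] k assms(2) by auto
  qed
  have vinj: "i = j" if "i < n" "j < n" "multiplicity (int p) (a i) = multiplicity (int p) (a j)" for i j
  proof -
    have "i \<in> \<sigma> ` {..<n}" using bs that by (simp add: bij_betw_def)
    then obtain k where k: "k < n" "i = \<sigma> k" by auto
    have "j \<in> \<sigma> ` {..<n}" using bs that by (simp add: bij_betw_def)
    then obtain l where l: "l < n" "j = \<sigma> l" by auto
    have "n - 1 - k = n - 1 - l" using v[OF k(1)] v[OF l(1)] k l that by auto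
    hence "k = l" using k l by auto
    thus ?thesis using k l by simp
  qed
  let ?A = "{..<n} \<rightarrow>\<^sub>E {0..<int p}"
  let ?g = "\<lambda>x. (\<Sum>i<n. a i * x i) mod (int p ^ n)"
  have inj: "inj_on ?g ?A"
  proof (rule inj_onI, rule ccontr)
    fix x y assume x: "x \<in> ?A" and y: "y \<in> ?A" and eq: "?g x = ?g y" and ne: "x \<noteq> y"
    define d where "d i = x i - y i" for i
    have "\<exists>i<n. x i \<noteq> y i"
    proof (rule ccontr)
      assume "\<not> ?thesis"
      hence "x = y" using x y by (intro PiE_ext[OF x y]) auto
      thus False using ne by simp
    qed
    then obtain j0 where "j0 < n" "d j0 \<noteq> 0" unfolding d_def by auto
    then obtain j where j: "j < n \<and> d j \<noteq> 0"
      and jmin: "\<And>i. i < n \<and> d i \<noteq> 0 \<Longrightarrow> multiplicity (int p) (a j) \<le> multiplicity (int p) (a i)"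
      using ex_has_least_nat[of "\<lambda>i. i < n \<and> d i \<noteq> 0" j0 "\<lambda>i. multiplicity (int p) (a i)"] by blast
    define k where "k = multiplicity (int p) (a j)"
    have kn: "Suc k \<le> n" using vlt[of j] j k_def by simp
    have dbound: "\<bar>d i\<bar> < int p" if "i < n" for i
    proof -
      have "0 \<le> x i" "x i < int p" "0 \<le> y i" "y i < int p" using x y that by (auto simp: PiE_iff)
      thus ?thesis unfolding d_def abs_less_iff by linarith
    qed
    have "int p ^ n dvd (\<Sum>i<n. a i * x i) - (\<Sum>i<n. a i * y i)"
      using eq by (simp add: mod_eq_dvd_iff)
    hence "int p ^ n dvd (\<Sum>i<n. a i * d i)"
      by (simp add: d_def sum_subtractf[symmetric] algebra_simps)
    hence S: "int p ^ Suc k dvd (\<Sum>i<n. a i * d i)"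
      using kn by (meson dvd_trans le_imp_power_dvd)
    have rest: "int p ^ Suc k dvd (\<Sum>i\<in>{..<n} - {j}. a i * d i)"
    proof (rule dvd_sum)
      fix i assume i: "i \<in> {..<n} - {j}"
      show "int p ^ Suc k dvd a i * d i"
      proof (cases "d i = 0")
        case False
        have "k \<le> multiplicity (int p) (a i)" using jmin[of i] i False k_def by auto
        moreover have "k \<noteq> multiplicity (int p) (a i)" using vinj[of j i] i j k_def by auto
        ultimately have "Suc k \<le> multiplicity (int p) (a i)" by simp
        hence "int p ^ Suc k dvd a i" by (rule multiplicity_dvd')
        thus ?thesis by simp
      qed simp
    qed
    have "(\<Sum>i<n. a i * d i) = a j * d j + (\<Sum>i\<in>{..<n} - {j}. a i * d i)"
      using j by (subst sum.remove[of _ j]) auto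
    hence "int p ^ Suc k dvd a j * d j" using S rest by (metis dvd_add_left_iff)
    moreover obtain u where u: "a j = int p ^ k * u"
      using multiplicity_dvd[of "int p" "a j"] k_def by (auto simp: dvd_def)
    ultimately have "int p ^ k * int p dvd int p ^ k * (u * d j)" by (simp add: algebra_simps)
    hence "int p dvd u * d j" using p1 by (subst (asm) dvd_times_left_cancel_iff) auto
    moreover have "\<not> int p dvd u"
    proof
      assume "int p dvd u"
      hence "int p ^ Suc k dvd a j" using u by (metis dvd_refl mult_dvd_mono power_Suc2)
      moreover have "a j \<noteq> 0" using anz j by blast
      ultimately show False using power_dvd_iff_le_multiplicity[OF \<open>a j \<noteq> 0\<close> nu, of "Suc k"] k_def
        by simp
    qed
    ultimately have "int p dvd d j" using pp prime_dvd_mult_iff by blast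
    hence "\<bar>int p\<bar> \<le> \<bar>d j\<bar>" using j dvd_imp_le_int[of "d j" "int p"] by simp
    thus False using dbound[of j] j by simp
  qed
  have "?g ` ?A \<subseteq> {0..<int p ^ n}" using p1 by auto
  moreover have "card (?g ` ?A) = card {0..<int p ^ n}"
    using inj by (simp add: card_image card_PiE flip: of_nat_power)
  ultimately have "?g ` ?A = {0..<int p ^ n}" by (simp add: card_subset_eq)
  thus "bij_betw (\<lambda>x. (\<Sum>i<n. a i * x i) mod (int p ^ n))
            ({..<n} \<rightarrow>\<^sub>E {0..<int p}) {0..<int p ^ n}" using inj by (simp add: bij_betw_def)
qed

end
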